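(* Let $\mathbb{T}$ be a time scale, let $f:\mathbb{T}\to\mathbb{R}$, let $t\in\mathbb{T}^{\kappa}$ and let $\alpha\in(0,1]$. Then: (i) If $f$ is continuous at $t$ and $t$ is right-scattered, then $f$ is delta differentiable of order $\alpha$ at $t$ and $$f^{\Delta^{\alpha}}(t)=\frac{f^{\alpha}(\sigma(t))-f^{\alpha}(t)}{\sigma^{\alpha}(t)-t^{\alpha}}.$$ (ii) If $t$ is right-dense, then $f$ is delta differentiable of order $\alpha$ at $t$ if and only if the limit $\lim_{s\to t,\, s\in\mathbb{T}}\frac{f^{\alpha}(t)-f^{\alpha}(s)}{t^{\alpha}-s^{\alpha}}$ exists as a finite number, and in this case $$f^{\Delta^{\alpha}}(t)=\lim_{s\to t}\frac{f^{\alpha}(t)-f^{\alpha}(s)}{t^{\alpha}-s^{\alpha}}.$$ (iii) If $f$ is delta differentiable of order $\alpha$ at $t$, then $$f^{\alpha}(\sigma(t))=f^{\alpha}(t)+\bigl(\sigma(t)^{\alpha}-t^{\alpha}\bigr)f^{\Delta^{\alpha}}(t).$$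
   Context: A time scale $\mathbb{T}$ is a nonempty closed subset of $\mathbb{R}$. The forward jump operator is $\sigma(t)=\inf\{s\in\mathbb{T}:s>t\}$ and the backward jump operator is $\rho(t)=\sup\{s\in\mathbb{T}:s<t\}$. A point $t$ is right-scattered if $\sigma(t)>t$, and right-dense if $t<\sup\mathbb{T}$ and $\sigma(t)=t$. If $\mathbb{T}$ has a left-scattered maximum $m$ (i.e. $\rho(m)<m$), then $\mathbb{T}^{\kappa}=\mathbb{T}\setminus\{m\}$; otherwise $\mathbb{T}^{\kappa}=\mathbb{T}$. For a real-valued $f$, $f^{\alpha}$ denotes the pointwise power $(f(\cdot))^{\alpha}$, $\sigma^{\alpha}(t)=\sigma(t)^{\alpha}$, and powers of real numbers (possibly negative) are taken as complex numbers, so these quantities may be complex. Definition: for $\alpha\in(0,1]$ and $t\in\mathbb{T}^{\kappa}$, $f$ is delta differentiable of order $\alpha$ at $t$ with delta derivative of order $\alpha$ equal to the (complex) number $f^{\Delta^{\alpha}}(t)$ if for every $\epsilon>0$ there is $\delta>0$ such that, with $U=(t-\delta,t+\delta)\cap\mathbb{T}$, $$\bigl|[f^{\alpha}(\sigma(t))-f^{\alpha}(s)]-f^{\Delta^{\alpha}}(t)[\sigma(t)^{\alpha}-s^{\alpha}]\bigr|\le\epsilon\,|\sigma(t)^{\alpha}-s^{\alpha}|\quad\text{for all } s\in U.$$ *)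

theory Defs
  imports "HOL-Analysis.Analysis"
begin

definition time_scale :: "real set \<Rightarrow> bool" where
  "time_scale T \<longleftrightarrow> T \<noteq> {} \<and> closed T"

text \<open>Forward jump; convention inf of the empty set = sup T, i.e. sigma(max T) = max T.\<close>
definition sigma :: "real set \<Rightarrow> real \<Rightarrow> real" where
  "sigma T t = (if \<exists>s\<in>T. s > t then Inf {s\<in>T. s > t} else t)"

text \<open>Backward jump; convention sup of the empty set = inf T, i.e. rho(min T) = min T.\<close>
definition rho :: "real set \<Rightarrow> real \<Rightarrow> real" where
  "rho T t = (if \<exists>s\<in>T. s < t then Sup {s\<in>T. s < t} else t)"

definition right_scattered :: "real set \<Rightarrow> real \<Rightarrow> bool" where
  "right_scattered T t \<longleftrightarrow> sigma T t > t"

definition right_dense :: "real set \<Rightarrow> real \<Rightarrow> bool" where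
  "right_dense T t \<longleftrightarrow> (\<exists>s\<in>T. t < s) \<and> sigma T t = t"

definition kappa :: "real set \<Rightarrow> real set" where
  "kappa T = (if \<exists>m\<in>T. (\<forall>s\<in>T. s \<le> m) \<and> rho T m < m
              then T - {m. m \<in> T \<and> (\<forall>s\<in>T. s \<le> m)} else T)"

text \<open>Real number raised to a real power, computed as a complex number (principal branch).\<close>
definition cpow :: "real \<Rightarrow> real \<Rightarrow> complex" where
  "cpow x a = (complex_of_real x) powr (complex_of_real a)"

definition has_delta_deriv_alpha ::
    "real set \<Rightarrow> real \<Rightarrow> (real \<Rightarrow> real) \<Rightarrow> complex \<Rightarrow> real \<Rightarrow> bool" where
  "has_delta_deriv_alpha T \<alpha> f D t \<longleftrightarrow>
     (\<forall>\<epsilon>>0. \<exists>\<delta>>0. \<forall>s\<in>T. \<bar>s - t\<bar> < \<delta> \<longrightarrow>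
        cmod ((cpow (f (sigma T t)) \<alpha> - cpow (f s) \<alpha>)
              - D * (cpow (sigma T t) \<alpha> - cpow s \<alpha>))
        \<le> \<epsilon> * cmod (cpow (sigma T t) \<alpha> - cpow s \<alpha>))"

definition delta_differentiable_alpha ::
    "real set \<Rightarrow> real \<Rightarrow> (real \<Rightarrow> real) \<Rightarrow> real \<Rightarrow> bool" where
  "delta_differentiable_alpha T \<alpha> f t \<longleftrightarrow> (\<exists>D. has_delta_deriv_alpha T \<alpha> f D t)"

end

theory Submission imports Defs begin

lemma cpow_eq: "cpow x a = (if x<0 then of_real (\<bar>x\<bar> powr a) * exp (\<i> * pi * a) else of_real (x powr a))"
  unfolding cpow_def by (rule powr_of_real_if)

lemma cpow_norm: "cmod (cpow x a) = \<bar>x\<bar> powr a"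
  unfolding cpow_def by (simp add: norm_powr_real_powr')

lemma exp_ne1: fixes a :: real assumes "0 < a" "a \<le> 1" shows "exp (\<i> * of_real pi * of_real a) \<noteq> 1"
proof
  assume "exp (\<i> * of_real pi * of_real a) = 1"
  then have "Re (exp (\<i> * of_real pi * of_real a)) = 1" by simp
  then have c: "cos (pi * a) = 1" by (simp add: Re_exp)
  have "cos (pi * a) < 1"
  proof -
    have "cos (pi*a) < cos 0" using assms
      by (intro cos_monotone_0_pi) (auto simp: mult_le_cancel_left1)
    thus ?thesis by simp
  qed
  with c show False by simp
qed

lemma cpow_inj: assumes "0 < a" "a \<le> 1" "cpow x a = cpow y a" shows "x = y"
proof -
  have "\<bar>x\<bar> powr a = \<bar>y\<bar> powr a" using assms(3) by (metis cpow_norm)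
  hence ab: "\<bar>x\<bar> = \<bar>y\<bar>" using assms(1) 
  proof -
    have "\<not> \<bar>x\<bar> < \<bar>y\<bar>" "\<not> \<bar>y\<bar> < \<bar>x\<bar>"
      using powr_less_mono2[OF assms(1), of "\<bar>x\<bar>" "\<bar>y\<bar>"] powr_less_mono2[OF assms(1), of "\<bar>y\<bar>" "\<bar>x\<bar>"]
        \<open>\<bar>x\<bar> powr a = \<bar>y\<bar> powr a\<close> by auto
    thus ?thesis by simp
  qed
  show ?thesis
  proof (rule ccontr)
    assume "x \<noteq> y"
    with ab have "x = - y" "x \<noteq> 0" by auto
    then have "(x < 0 \<and> 0 < y) \<or> (y < 0 \<and> 0 < x)" by auto
    moreover have "\<bar>x\<bar> powr a \<noteq> 0" using \<open>x\<noteq>0\<close> by simp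
    ultimately show False using assms(3) exp_ne1[OF assms(1,2)] ab
      unfolding cpow_eq by (auto simp: of_real_eq_iff)
  qed
qed

lemma cpow_tendsto:
  assumes g: "(g \<longlongrightarrow> l) F" and a: "0 < a"
  shows "((\<lambda>s. cpow (g s) a) \<longlongrightarrow> cpow l a) F"
proof (cases "l = 0")
  case True
  have "((\<lambda>s. \<bar>g s\<bar> powr a) \<longlongrightarrow> 0) F"
    using g True a by (intro tendsto_zero_powrI) (auto intro: tendsto_eq_intros)
  hence "((\<lambda>s. cmod (cpow (g s) a)) \<longlongrightarrow> 0) F" by (simp add: cpow_norm)
  hence "((\<lambda>s. cpow (g s) a) \<longlongrightarrow> 0) F" by (simp add: tendsto_norm_zero_iff)
  thus ?thesis using True by (simp add: cpow_def)
next
  case False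
  show ?thesis
  proof (cases "l < 0")
    case True
    have ev: "eventually (\<lambda>s. g s < 0) F" using order_tendstoD(2)[OF g True] .
    have "((\<lambda>s. of_real (\<bar>g s\<bar> powr a) * exp (\<i> * pi * a)) \<longlongrightarrow> of_real (\<bar>l\<bar> powr a) * exp (\<i> * pi * a)) F"
      using g True by (intro tendsto_intros tendsto_powr) auto
    moreover have "eventually (\<lambda>s. cpow (g s) a = of_real (\<bar>g s\<bar> powr a) * exp (\<i> * pi * a)) F"
      using ev by (rule eventually_mono) (simp add: cpow_eq)
    ultimately show ?thesis using True
      by (subst tendsto_cong) (auto simp: cpow_eq)
  next
    case nt: False
    with False have lp: "l > 0" by auto
    have ev: "eventually (\<lambda>s. g s > 0) F" using order_tendstoD(1)[OF g lp] .
    have "((\<lambda>s. of_real (g s powr a)) \<longlongrightarrow> (of_real (l powr a) :: complex)) F"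
      using g lp by (intro tendsto_intros tendsto_powr) auto
    moreover have "eventually (\<lambda>s. cpow (g s) a = of_real (g s powr a)) F"
      using ev by (rule eventually_mono) (simp add: cpow_eq)
    ultimately show ?thesis using lp
      by (subst tendsto_cong) (auto simp: cpow_eq)
  qed
qed

lemma small_le0: assumes "\<And>e. e > 0 \<Longrightarrow> (x::real) \<le> e * m" "m \<ge> 0" shows "x \<le> 0"
proof (rule ccontr)
  assume "\<not> x \<le> 0"
  hence "x > 0" by simp
  have "x \<le> (x / (2*(m+1))) * m" using assms(1)[of "x/(2*(m+1))"] \<open>x>0\<close> assms(2) by simp
  also have "\<dots> < x" using \<open>x>0\<close> assms(2) by (simp add: field_simps add_nonneg_pos)
  finally show False by simp
qed

lemma kappa_sub: "kappa T \<subseteq> T" unfolding kappa_def by auto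

lemma deriv_iff_tendsto:
  assumes a: "0 < a" "a \<le> 1" and sg: "sigma T t = t"
  shows "has_delta_deriv_alpha T a f D t \<longleftrightarrow>
    ((\<lambda>s. (cpow (f t) a - cpow (f s) a) / (cpow t a - cpow s a)) \<longlongrightarrow> D) (at t within T)"
proof -
  define Q where "Q = (\<lambda>s. (cpow (f t) a - cpow (f s) a) / (cpow t a - cpow s a))"
  have key: "cmod (cpow (f t) a - cpow (f s) a - D * (cpow t a - cpow s a)) \<le> e * cmod (cpow t a - cpow s a)
     \<longleftrightarrow> cmod (Q s - D) \<le> e" if "s \<noteq> t" for s e
  proof -
    have nz: "cpow t a - cpow s a \<noteq> 0" using cpow_inj[OF a, of t s] that by auto
    have "Q s - D = (cpow (f t) a - cpow (f s) a - D * (cpow t a - cpow s a)) / (cpow t a - cpow s a)"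
      using nz unfolding Q_def by (simp add: field_simps)
    hence "cmod (Q s - D) = cmod (cpow (f t) a - cpow (f s) a - D * (cpow t a - cpow s a)) / cmod (cpow t a - cpow s a)"
      by (simp add: norm_divide)
    thus ?thesis using nz by (simp add: divide_le_eq)
  qed
  show ?thesis
    unfolding has_delta_deriv_alpha_def sg Q_def[symmetric] Lim_within dist_norm
  proof safe
    fix e :: real assume H: "\<forall>\<epsilon>>0. \<exists>\<delta>>0. \<forall>s\<in>T. \<bar>s - t\<bar> < \<delta> \<longrightarrow>
        cmod (cpow (f t) a - cpow (f s) a - D * (cpow t a - cpow s a)) \<le> \<epsilon> * cmod (cpow t a - cpow s a)"
      and e: "0 < e"
    then obtain d where d: "d > 0" "\<forall>s\<in>T. \<bar>s - t\<bar> < d \<longrightarrow>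
        cmod (cpow (f t) a - cpow (f s) a - D * (cpow t a - cpow s a)) \<le> e/2 * cmod (cpow t a - cpow s a)"
      using H[rule_format, of "e/2"] by auto
    show "\<exists>d>0. \<forall>x\<in>T. 0 < norm (x - t) \<and> norm (x - t) < d \<longrightarrow> cmod (Q x - D) < e"
    proof (intro exI[of _ d] conjI ballI impI)
      fix x assume "x \<in> T" "0 < norm (x - t) \<and> norm (x - t) < d"
      then have "x \<noteq> t" "\<bar>x - t\<bar> < d" by auto
      then have "cmod (Q x - D) \<le> e/2" using key d \<open>x \<in> T\<close> by blast
      thus "cmod (Q x - D) < e" using e by simp
    qed (use d in auto)
  next
    fix e :: real assume H: "\<forall>e>0. \<exists>d>0. \<forall>x\<in>T. 0 < norm (x - t) \<and> norm (x - t) < d \<longrightarrow> cmod (Q x - D) < e"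
      and e: "0 < e"
    then obtain d where d: "d > 0" "\<forall>x\<in>T. 0 < norm (x - t) \<and> norm (x - t) < d \<longrightarrow> cmod (Q x - D) < e"
      by auto
    show "\<exists>\<delta>>0. \<forall>s\<in>T. \<bar>s - t\<bar> < \<delta> \<longrightarrow>
        cmod (cpow (f t) a - cpow (f s) a - D * (cpow t a - cpow s a)) \<le> e * cmod (cpow t a - cpow s a)"
    proof (intro exI[of _ d] conjI ballI impI)
      fix s assume s: "s \<in> T" "\<bar>s - t\<bar> < d"
      show "cmod (cpow (f t) a - cpow (f s) a - D * (cpow t a - cpow s a)) \<le> e * cmod (cpow t a - cpow s a)"
      proof (cases "s = t")
        case False
        then have "cmod (Q s - D) < e" using d s by auto
        then show ?thesis using key[OF False] by simp
      qed simp
    qed (use d in auto)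
  qed
qed

lemma part_iii:
  assumes "t \<in> T" and H: "has_delta_deriv_alpha T a f D t"
  shows "cpow (f (sigma T t)) a = cpow (f t) a + (cpow (sigma T t) a - cpow t a) * D"
proof -
  let ?N = "cmod ((cpow (f (sigma T t)) a - cpow (f t) a) - D * (cpow (sigma T t) a - cpow t a))"
  let ?M = "cmod (cpow (sigma T t) a - cpow t a)"
  have "?N \<le> e * ?M" if ep: "e > 0" for e
  proof -
    obtain d where "d > 0" "\<forall>s\<in>T. \<bar>s - t\<bar> < d \<longrightarrow>
      cmod ((cpow (f (sigma T t)) a - cpow (f s) a) - D * (cpow (sigma T t) a - cpow s a))
              \<le> e * cmod (cpow (sigma T t) a - cpow s a)"
      using H ep unfolding has_delta_deriv_alpha_def by meson
    thus ?thesis using assms(1) by auto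
  qed
  hence "?N \<le> 0" by (intro small_le0) auto
  hence "?N = 0" by (meson norm_ge_zero order_antisym)
  thus ?thesis by (simp add: algebra_simps)
qed

lemma part_i:
  assumes a: "0 < a" "a \<le> 1" and tT: "t \<in> T"
    and c: "continuous (at t within T) f" and rs: "sigma T t \<noteq> t"
  shows "has_delta_deriv_alpha T a f
              ((cpow (f (sigma T t)) a - cpow (f t) a) / (cpow (sigma T t) a - cpow t a)) t"
  unfolding has_delta_deriv_alpha_def
proof (intro allI impI)
  fix e :: real assume e: "e > 0"
  define sg where "sg = sigma T t"
  define D0 where "D0 = (cpow (f sg) a - cpow (f t) a) / (cpow sg a - cpow t a)"
  have nz: "cpow sg a - cpow t a \<noteq> 0" using cpow_inj[OF a, of sg t] rs unfolding sg_def by auto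
  define m where "m = cmod (cpow sg a - cpow t a)"
  have m: "m > 0" using nz unfolding m_def by simp
  have ft: "(f \<longlongrightarrow> f t) (at t within T)" using c by (simp add: continuous_within)
  have A: "((\<lambda>s. cpow (f s) a) \<longlongrightarrow> cpow (f t) a) (at t within T)" by (rule cpow_tendsto[OF ft a(1)])
  have B: "((\<lambda>s. cpow s a) \<longlongrightarrow> cpow t a) (at t within T)" by (rule cpow_tendsto[OF _ a(1)]) (rule tendsto_ident_at)
  have N: "((\<lambda>s. cmod ((cpow (f sg) a - cpow (f s) a) - D0 * (cpow sg a - cpow s a))) \<longlongrightarrow>
       cmod ((cpow (f sg) a - cpow (f t) a) - D0 * (cpow sg a - cpow t a))) (at t within T)"
    by (intro tendsto_intros A B)
  have z: "(cpow (f sg) a - cpow (f t) a) - D0 * (cpow sg a - cpow t a) = 0"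
    using nz unfolding D0_def by (simp add: field_simps)
  have M: "((\<lambda>s. cmod (cpow sg a - cpow s a)) \<longlongrightarrow> m) (at t within T)"
    unfolding m_def by (intro tendsto_intros B)
  have ev1: "eventually (\<lambda>s. cmod ((cpow (f sg) a - cpow (f s) a) - D0 * (cpow sg a - cpow s a)) < e * m / 2) (at t within T)"
    using order_tendstoD(2)[OF N, of "e*m/2"] z e m by simp
  have ev2: "eventually (\<lambda>s. cmod (cpow sg a - cpow s a) > m / 2) (at t within T)"
    using order_tendstoD(1)[OF M, of "m/2"] m by simp
  have "eventually (\<lambda>s. cmod ((cpow (f sg) a - cpow (f s) a) - D0 * (cpow sg a - cpow s a))
          \<le> e * cmod (cpow sg a - cpow s a)) (at t within T)"
    using ev1 ev2
  proof eventually_elim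
    case (elim s)
    have "e * m / 2 \<le> e * cmod (cpow sg a - cpow s a)" using elim(2) e by simp
    thus ?case using elim(1) by linarith
  qed
  then obtain d where d: "d > 0" "\<forall>s\<in>T. s \<noteq> t \<and> dist s t < d \<longrightarrow>
      cmod ((cpow (f sg) a - cpow (f s) a) - D0 * (cpow sg a - cpow s a)) \<le> e * cmod (cpow sg a - cpow s a)"
    unfolding eventually_at by blast
  show "\<exists>\<delta>>0. \<forall>s\<in>T. \<bar>s - t\<bar> < \<delta> \<longrightarrow>
        cmod ((cpow (f (sigma T t)) a - cpow (f s) a) -
          (cpow (f (sigma T t)) a - cpow (f t) a) / (cpow (sigma T t) a - cpow t a) * (cpow (sigma T t) a - cpow s a))
        \<le> e * cmod (cpow (sigma T t) a - cpow s a)"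
    unfolding sg_def[symmetric] D0_def[symmetric]
  proof (intro exI[of _ d] conjI ballI impI)
    fix s assume s: "s \<in> T" "\<bar>s - t\<bar> < d"
    show "cmod ((cpow (f sg) a - cpow (f s) a) - D0 * (cpow sg a - cpow s a)) \<le> e * cmod (cpow sg a - cpow s a)"
    proof (cases "s = t")
      case True thus ?thesis using z e by simp
    next
      case False thus ?thesis using d s by (auto simp: dist_real_def)
    qed
  qed (use d in auto)
qed

theorem theorem1:
  fixes T :: "real set" and f :: "real \<Rightarrow> real" and t \<alpha> :: real
  assumes "time_scale T" and "t \<in> kappa T" and "0 < \<alpha>" and "\<alpha> \<le> 1"
  shows "(continuous (at t within T) f \<and> right_scattered T t \<longrightarrow>
            delta_differentiable_alpha T \<alpha> f t \<and>
            has_delta_deriv_alpha T \<alpha> f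
              ((cpow (f (sigma T t)) \<alpha> - cpow (f t) \<alpha>) / (cpow (sigma T t) \<alpha> - cpow t \<alpha>)) t)
       \<and> (right_dense T t \<longrightarrow>
            (delta_differentiable_alpha T \<alpha> f t \<longleftrightarrow>
               (\<exists>L. ((\<lambda>s. (cpow (f t) \<alpha> - cpow (f s) \<alpha>) / (cpow t \<alpha> - cpow s \<alpha>))
                        \<longlongrightarrow> L) (at t within T)))
            \<and> (\<forall>D. has_delta_deriv_alpha T \<alpha> f D t \<longrightarrow>
                 ((\<lambda>s. (cpow (f t) \<alpha> - cpow (f s) \<alpha>) / (cpow t \<alpha> - cpow s \<alpha>))
                        \<longlongrightarrow> D) (at t within T)))
       \<and> (\<forall>D. has_delta_deriv_alpha T \<alpha> f D t \<longrightarrow>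
            cpow (f (sigma T t)) \<alpha> = cpow (f t) \<alpha> + (cpow (sigma T t) \<alpha> - cpow t \<alpha>) * D)"

proof -
  have tT: "t \<in> T" using assms(2) kappa_sub by blast
  show ?thesis
  proof (intro conjI impI allI)
    assume "continuous (at t within T) f \<and> right_scattered T t"
    then show "has_delta_deriv_alpha T \<alpha> f
              ((cpow (f (sigma T t)) \<alpha> - cpow (f t) \<alpha>) / (cpow (sigma T t) \<alpha> - cpow t \<alpha>)) t"
      using part_i[OF assms(3,4) tT] unfolding right_scattered_def by auto
    then show "delta_differentiable_alpha T \<alpha> f t" unfolding delta_differentiable_alpha_def by blast
  next
    assume "right_dense T t"
    then have sg: "sigma T t = t" unfolding right_dense_def by auto
    show "delta_differentiable_alpha T \<alpha> f t \<longleftrightarrow>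
               (\<exists>L. ((\<lambda>s. (cpow (f t) \<alpha> - cpow (f s) \<alpha>) / (cpow t \<alpha> - cpow s \<alpha>))
                        \<longlongrightarrow> L) (at t within T))"
      unfolding delta_differentiable_alpha_def deriv_iff_tendsto[OF assms(3,4) sg] ..
    fix D assume "has_delta_deriv_alpha T \<alpha> f D t"
    then show "((\<lambda>s. (cpow (f t) \<alpha> - cpow (f s) \<alpha>) / (cpow t \<alpha> - cpow s \<alpha>))
                        \<longlongrightarrow> D) (at t within T)"
      using deriv_iff_tendsto[OF assms(3,4) sg] by blast
  next
    fix D assume "has_delta_deriv_alpha T \<alpha> f D t"
    then show "cpow (f (sigma T t)) \<alpha> = cpow (f t) \<alpha> + (cpow (sigma T t) \<alpha> - cpow t \<alpha>) * D"
      by (rule part_iii[OF tT])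
  qed
qed

end
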